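(* Let $\Psi_{\rm data}:\mathbb{R}^D\to\mathbb{R}$ be smooth, $m_{\rm prior}\in\mathbb{R}^D$, $\Sigma_{\rm prior}\in\mathbb{R}^{D\times D}$ symmetric positive definite. Consider the mean-field McKean--Vlasov SDE $${\rm d}\theta_\tau=-\Sigma_\tau\Big\{\nabla_\theta V_\tau(\theta_\tau)+\tfrac12\Sigma_{\rm prior}^{-1}(\theta_\tau+m_\tau-2m_{\rm prior})\Big\}{\rm d}\tau+\Sigma_\tau^{1/2}{\rm d}W_\tau,$$ where $W_\tau$ is standard $D$-dimensional Brownian motion, $\pi_\tau$ is the law of $\theta_\tau$ with mean $m_\tau$ and covariance $\Sigma_\tau$, and $V_\tau$ solves $\nabla_\theta\cdot(\pi_\tau\Sigma_\tau\nabla_\theta V_\tau)=-(\Psi_{\rm data}-\pi_\tau[\Psi_{\rm data}])\pi_\tau$. Then any stationary measure $\pi_\infty$ (with mean $m_\infty$ and covariance $\Sigma_\infty$) satisfies $$\frac12\nabla_\theta\cdot\Big(\pi_\infty\Sigma_\infty\big\{\nabla_\theta\log\pi_\infty+\Sigma_{\rm prior}^{-1}(\theta+m_\infty-2m_{\rm prior})\big\}\Big)=\pi_\infty(\Psi_{\rm data}-\pi_\infty[\Psi_{\rm data}]),$$ or, equivalently, for all (sufficiently regular, decaying) test functions $\phi:\mathbb{R}^D\to\mathbb{R}$, $$-\frac12\pi_\infty\Big[\nabla_\theta\phi\cdot\Sigma_\infty\big\{\nabla_\theta\log\pi_\infty+\Sigma_{\rm prior}^{-1}(\theta+m_\infty-2m_{\rm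 prior})\big\}\Big]=\pi_\infty\big[\phi\,(\Psi_{\rm data}-\pi_\infty[\Psi_{\rm data}])\big].$$
   Context: $\pi[f]$ denotes the expectation of $f$ under the PDF $\pi$. *)

theory Defs
  imports "HOL-Analysis.Analysis"
begin

definition partial :: "'n::finite \<Rightarrow> (real^'n \<Rightarrow> real) \<Rightarrow> real^'n \<Rightarrow> real" where
  "partial i f x = frechet_derivative f (at x) (axis i 1)"

definition grad :: "(real^'n::finite \<Rightarrow> real) \<Rightarrow> real^'n \<Rightarrow> real^'n" where
  "grad f x = (\<chi> i. partial i f x)"

definition hess :: "(real^'n::finite \<Rightarrow> real) \<Rightarrow> real^'n \<Rightarrow> real^'n^'n" where
  "hess f x = (\<chi> i j. partial j (partial i f) x)"

fun Ck :: "nat \<Rightarrow> (real^'n::finite \<Rightarrow> real) \<Rightarrow> bool" where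
  "Ck 0 f = continuous_on UNIV f"
| "Ck (Suc k) f = ((\<forall>x. f differentiable (at x)) \<and> continuous_on UNIV f \<and> (\<forall>i. Ck k (partial i f)))"

definition smooth :: "(real^'n::finite \<Rightarrow> real) \<Rightarrow> bool" where
  "smooth f \<longleftrightarrow> (\<forall>k. Ck k f)"

definition test_fun :: "(real^'n::finite \<Rightarrow> real) \<Rightarrow> bool" where
  "test_fun \<phi> \<longleftrightarrow> smooth \<phi> \<and> (\<exists>K. compact K \<and> (\<forall>x. x \<notin> K \<longrightarrow> \<phi> x = 0))"

definition expect :: "(real^'n::finite \<Rightarrow> real) \<Rightarrow> (real^'n \<Rightarrow> real) \<Rightarrow> real" where
  "expect p f = (\<integral>x. p x * f x \<partial>lborel)"

definition mean :: "(real^'n::finite \<Rightarrow> real) \<Rightarrow> real^'n" where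
  "mean p = (\<integral>x. p x *\<^sub>R x \<partial>lborel)"

definition cov :: "(real^'n::finite \<Rightarrow> real) \<Rightarrow> real^'n^'n" where
  "cov p = (\<integral>x. p x *\<^sub>R (\<chi> i j. (x - mean p)$i * (x - mean p)$j) \<partial>lborel)"

definition sym_posdef :: "real^'n^'n::finite \<Rightarrow> bool" where
  "sym_posdef A \<longleftrightarrow> transpose A = A \<and> (\<forall>x. x \<noteq> 0 \<longrightarrow> x \<bullet> (A *v x) > 0)"

definition drift :: "(real^'n::finite \<Rightarrow> real) \<Rightarrow> (real^'n \<Rightarrow> real) \<Rightarrow> real^'n^'n \<Rightarrow> real^'n
                     \<Rightarrow> real^'n \<Rightarrow> real^'n" where
  "drift p V Sp mp \<theta> = - (cov p *v (grad V \<theta> + (1/2) *\<^sub>R (matrix_inv Sp *v (\<theta> + mean p - 2 *\<^sub>R mp))))"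

text \<open>Weak form of the equation  div(p Sigma grad V) = -(Psi - p[Psi]) p  defining V.\<close>

definition solves_V :: "(real^'n::finite \<Rightarrow> real) \<Rightarrow> (real^'n \<Rightarrow> real) \<Rightarrow> (real^'n \<Rightarrow> real) \<Rightarrow> bool" where
  "solves_V p Psi V \<longleftrightarrow> (\<forall>\<phi>. test_fun \<phi> \<longrightarrow>
      expect p (\<lambda>x. grad \<phi> x \<bullet> (cov p *v grad V x)) = expect p (\<lambda>x. \<phi> x * (Psi x - expect p Psi)))"

text \<open>Stationarity of the law p for the SDE  d theta = drift dt + Sigma^(1/2) dW  (generator
  L phi = grad phi . drift + 1/2 tr(Sigma Hess phi)), i.e. the weak stationary Fokker--Planck equation.\<close>

definition stationary :: "(real^'n::finite \<Rightarrow> real) \<Rightarrow> (real^'n \<Rightarrow> real) \<Rightarrow> real^'n^'n \<Rightarrow> real^'n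
                           \<Rightarrow> (real^'n \<Rightarrow> real) \<Rightarrow> bool" where
  "stationary p V Sp mp Psi \<longleftrightarrow> solves_V p Psi V \<and> (\<forall>\<phi>. test_fun \<phi> \<longrightarrow>
      expect p (\<lambda>x. grad \<phi> x \<bullet> drift p V Sp mp x
                    + (1/2) * (\<Sum>i\<in>UNIV. \<Sum>j\<in>UNIV. cov p $ i $ j * hess \<phi> x $ i $ j)) = 0)"

end

theory Submission
  imports Defs
begin

lemma integrable_cpt:
  fixes f :: "real^'n::finite \<Rightarrow> real"
  assumes "continuous_on UNIV f" "compact K" "\<And>x. x \<notin> K \<Longrightarrow> f x = 0"
  shows "integrable lborel f"
proof -
  have "integrable lborel (\<lambda>x. indicator K x *\<^sub>R f x)"
    by (rule borel_integrable_compact) (use assms continuous_on_subset[OF assms(1) subset_UNIV] in auto)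
  also have "(\<lambda>x. indicator K x *\<^sub>R f x) = f"
    using assms(3) by (auto simp: indicator_def fun_eq_iff)
  finally show ?thesis .
qed

lemma ibp0:
  fixes g :: "real^'n::finite \<Rightarrow> real"
  assumes der: "\<And>x. (g has_derivative G x) (at x)"
    and cont: "continuous_on UNIV (\<lambda>x. G x v)"
    and K: "compact K" and gz: "\<And>x. x \<notin> K \<Longrightarrow> g x = 0"
    and Gz: "\<And>x. x \<notin> K \<Longrightarrow> G x v = 0"
  shows "integral\<^sup>L lborel (\<lambda>x. G x v) = 0"
proof -
  obtain B where B: "\<And>x. \<bar>G x v\<bar> \<le> B"
  proof -
    have "compact ((\<lambda>x. G x v) ` K)" using compact_continuous_image[OF continuous_on_subset[OF cont subset_UNIV] K] .
    then obtain B0 where "\<forall>y\<in>(\<lambda>x. G x v) ` K. norm y \<le> B0" using compact_imp_bounded[THEN bounded_iff[THEN iffD1]] by blast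
    then have "\<bar>G x v\<bar> \<le> max B0 0" for x using Gz[of x] by (cases "x \<in> K") auto
    then show ?thesis using that by blast
  qed
  obtain R0 where R0: "K \<subseteq> cball 0 R0" using compact_imp_bounded[OF K] unfolding bounded_pos by (auto simp: subset_iff)
  define R where "R = R0 + norm v"
  define t :: "nat \<Rightarrow> real" where "t n = inverse (real (Suc n))" for n
  have t01: "0 < t n" "t n \<le> 1" for n unfolding t_def by (auto simp: field_simps)
  define s where "s n x = (g (x + t n *\<^sub>R v) - g x) / t n" for n x
  have contg: "continuous_on UNIV g" using der
    by (meson has_derivative_continuous continuous_at_imp_continuous_on)
  have dline: "((\<lambda>r. g (x + r *\<^sub>R v)) has_real_derivative G (x + r *\<^sub>R v) v) (at r within S)" for x r S
  proof -
    have "((\<lambda>r. x + r *\<^sub>R v) has_derivative (\<lambda>h. h *\<^sub>R v)) (at r within S)"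
      by (auto intro!: derivative_eq_intros)
    from has_derivative_compose[OF this der]
    have "((\<lambda>r. g (x + r *\<^sub>R v)) has_derivative (\<lambda>h. G (x + r *\<^sub>R v) (h *\<^sub>R v))) (at r within S)"
      by (simp add: o_def)
    moreover have "G (x + r *\<^sub>R v) (h *\<^sub>R v) = h * G (x + r *\<^sub>R v) v" for h
      using linear_scale[OF bounded_linear.linear[OF has_derivative_bounded_linear[OF der[of "x + r *\<^sub>R v"]]]]
      by simp
    ultimately show ?thesis unfolding has_field_derivative_def
      by (simp add: mult.commute[of _ "G (x + r *\<^sub>R v) v"])
  qed
  have int0: "integral\<^sup>L lborel (s n) = 0" for n
  proof -
    have ig: "integrable lborel g" by (rule integrable_cpt[OF contg K gz])
    have "integral\<^sup>L lborel (\<lambda>x. g (x + t n *\<^sub>R v)) = integral\<^sup>L lborel g"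
    proof -
      have "integral\<^sup>L lborel (\<lambda>x. g (t n *\<^sub>R v + x)) = integral\<^sup>L (distr lborel borel ((+) (t n *\<^sub>R v))) g"
        using contg by (subst integral_distr) (auto simp: borel_measurable_continuous_onI[OF contg])
      then show ?thesis by (simp add: lborel_distr_plus add.commute)
    qed
    moreover have "integrable lborel (\<lambda>x. g (x + t n *\<^sub>R v))"
      using ig lborel_distr_plus[of "t n *\<^sub>R v"] integrable_distr_eq[of "(+) (t n *\<^sub>R v)" lborel borel g]
      contg by (simp add: add.commute borel_measurable_continuous_onI)
    ultimately show ?thesis unfolding s_def using ig by simp
  qed
  have lim: "(\<lambda>n. integral\<^sup>L lborel (s n)) \<longlonglongrightarrow> integral\<^sup>L lborel (\<lambda>x. G x v)"
  proof (rule integral_dominated_convergence[where w="\<lambda>x. B * indicator (cball 0 R) x"])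
    show "(\<lambda>x. G x v) \<in> borel_measurable lborel" by (simp add: borel_measurable_continuous_onI[OF cont])
    show "s n \<in> borel_measurable lborel" for n unfolding s_def using borel_measurable_continuous_onI[OF contg]
      by measurable
    show "integrable lborel (\<lambda>x. B * indicator (cball 0 R) x)"
      by (auto intro!: integrable_real_mult_indicator emeasure_compact_finite simp: less_top[symmetric])
    show "AE x in lborel. (\<lambda>n. s n x) \<longlonglongrightarrow> G x v"
    proof (rule AE_I2)
      fix x
      have "((\<lambda>r. g (x + r *\<^sub>R v)) has_real_derivative G x v) (at 0)" using dline[of x 0 UNIV] by (simp only: scaleR_zero_left add_0_right)
      then have "((\<lambda>r. (g (x + r *\<^sub>R v) - g x) / r) \<longlongrightarrow> G x v) (at 0)"
        unfolding DERIV_def by simp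
      moreover have "t \<longlonglongrightarrow> 0" unfolding t_def by (rule LIMSEQ_inverse_real_of_nat)
      moreover have "\<forall>i. t i \<noteq> 0" using t01(1) by (metis less_irrefl)
      ultimately have "((\<lambda>r. (g (x + r *\<^sub>R v) - g x) / r) \<circ> t) \<longlonglongrightarrow> G x v"
        using tendsto_at_iff_sequentially[THEN iffD1, rule_format, of _ _ 0 UNIV t] by simp
      then show "(\<lambda>n. s n x) \<longlonglongrightarrow> G x v"
        unfolding s_def o_def .

    qed
    show "AE x in lborel. norm (s n x) \<le> B * indicator (cball 0 R) x" for n
    proof (rule AE_I2)
      fix x
      obtain z where "g (x + t n *\<^sub>R v) - g (x + 0 *\<^sub>R v) = (t n - 0) * G (x + z *\<^sub>R v) v"
        using mvt_very_simple[of 0 "t n" "\<lambda>r. g (x + r *\<^sub>R v)" "\<lambda>r h. h * G (x + r *\<^sub>R v) v"]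
          dline t01(1)[of n] unfolding has_field_derivative_def by (auto simp: mult.commute[of _ "G _ v"])
      then have "\<bar>s n x\<bar> \<le> B" unfolding s_def using t01[of n] B[of "x + z *\<^sub>R v"]
        by (simp add: abs_mult)
      moreover have "s n x = 0" if "x \<notin> cball 0 R"
      proof -
        have "x \<notin> K" using that R0 unfolding R_def by (smt (verit) mem_cball_0 norm_ge_zero subsetD)
        moreover have "x + t n *\<^sub>R v \<notin> K"
        proof
          assume "x + t n *\<^sub>R v \<in> K"
          then have "norm (x + t n *\<^sub>R v) \<le> R0" using R0 by auto
          moreover have "norm (t n *\<^sub>R v) \<le> norm v" using t01[of n] by (simp add: mult_left_le_one_le)
          ultimately have "norm x \<le> R" unfolding R_def using norm_triangle_ineq4[of "x + t n *\<^sub>R v" "t n *\<^sub>R v"] by simp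
          then show False using that by auto
        qed
        ultimately show ?thesis unfolding s_def using gz by simp
      qed
      ultimately show "norm (s n x) \<le> B * indicator (cball 0 R) x"
        by (cases "x \<in> cball 0 R") auto
    qed
  qed
  then show ?thesis using int0 LIMSEQ_unique by (simp add: LIMSEQ_const_iff)
qed


lemma partial_zero_outside:
  assumes K: "compact K" and z: "\<And>x. x \<notin> K \<Longrightarrow> f x = 0" and x: "x \<notin> K"
  shows "partial i f x = 0"
proof -
  have "((\<lambda>_. 0::real) has_derivative (\<lambda>_. 0)) (at x)" by simp
  then have "(f has_derivative (\<lambda>_. 0)) (at x)"
    by (rule has_derivative_transform_within_open[where s="- K"])
       (use K x z compact_imp_closed in \<open>auto simp: open_Compl\<close>)
  then show ?thesis unfolding partial_def using frechet_derivative_at by metis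
qed

lemma ln_partial:
  fixes p :: "real^'n::finite \<Rightarrow> real"
  assumes "p x > 0" "p differentiable (at x)"
  shows "partial i (\<lambda>y. ln (p y)) x = partial i p x / p x"
proof -
  have d: "(p has_derivative frechet_derivative p (at x)) (at x)"
    using assms(2) frechet_derivative_works by blast
  have "((\<lambda>y. ln (p y)) has_derivative (\<lambda>h. frechet_derivative p (at x) h * inverse (p x))) (at x)"
    by (rule DERIV_compose_FDERIV[OF DERIV_ln[OF assms(1)] d])
  from frechet_derivative_at[OF this] show ?thesis
    unfolding partial_def by (metis divide_inverse)
qed

lemma inner_mat:
  fixes a b :: "real^'n::finite" and S :: "real^'n^'n"
  shows "a \<bullet> (S *v b) = (\<Sum>i\<in>UNIV. \<Sum>j\<in>UNIV. S$i$j * (a$i * b$j))"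
  by (simp add: inner_vec_def matrix_vector_mult_def sum_distrib_left mult_ac)

lemma cont_mv:
  fixes f :: "real^'n::finite \<Rightarrow> real^'m::finite" and A :: "real^'m^'n"
  assumes "continuous_on UNIV f"
  shows "continuous_on UNIV (\<lambda>x. A *v f x)"
  unfolding matrix_vector_mult_def
  by (intro continuous_intros continuous_on_component assms)

lemma prod_ibp:
  fixes p q :: "real^'n::finite \<Rightarrow> real"
  assumes dp: "\<And>x. p differentiable (at x)" and dq: "\<And>x. q differentiable (at x)"
    and cp: "continuous_on UNIV p" and cq: "continuous_on UNIV q"
    and cpj: "continuous_on UNIV (partial j p)" and cqj: "continuous_on UNIV (partial j q)"
    and K: "compact K" and qz: "\<And>x. x \<notin> K \<Longrightarrow> q x = 0"
  shows "integral\<^sup>L lborel (\<lambda>x. p x * partial j q x) = - integral\<^sup>L lborel (\<lambda>x. partial j p x * q x)"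
proof -
  define G where "G x = (\<lambda>h. p x * frechet_derivative q (at x) h + frechet_derivative p (at x) h * q x)" for x
  have der: "((\<lambda>x. p x * q x) has_derivative G x) (at x)" for x
    unfolding G_def using has_derivative_mult[OF frechet_derivative_works[THEN iffD1, OF dp] frechet_derivative_works[THEN iffD1, OF dq]]
    by simp
  have Gv: "G x (axis j 1) = p x * partial j q x + partial j p x * q x" for x
    unfolding G_def partial_def by simp
  have qjz: "partial j q x = 0" if "x \<notin> K" for x using partial_zero_outside[OF K qz that] .
  have "integral\<^sup>L lborel (\<lambda>x. G x (axis j 1)) = 0"
    by (rule ibp0[OF der, where K=K]) (use K qz qjz in \<open>auto simp: Gv intro!: continuous_intros cp cq cpj cqj\<close>)
  moreover have "integrable lborel (\<lambda>x. p x * partial j q x)"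
    by (rule integrable_cpt[OF _ K]) (auto simp: qjz intro!: continuous_intros cp cqj)
  moreover have "integrable lborel (\<lambda>x. partial j p x * q x)"
    by (rule integrable_cpt[OF _ K]) (auto simp: qz intro!: continuous_intros cq cpj)
  ultimately show ?thesis unfolding Gv by simp
qed


theorem mainTheorem6:
  fixes Psi :: "real^'n::finite \<Rightarrow> real"
    and mp :: "real^'n" and Sp :: "real^'n^'n"
    and p :: "real^'n \<Rightarrow> real" and V :: "real^'n \<Rightarrow> real"
  assumes Psi_smooth: "smooth Psi"
    and Sp: "sym_posdef Sp"
    and p_pos: "\<And>x. p x > 0"
    and p_C1: "Ck 1 p"
    and p_int: "integrable lborel p"
    and p_norm: "(\<integral>x. p x \<partial>lborel) = 1"
    and p_mom2: "integrable lborel (\<lambda>x. p x * norm x ^ 2)"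
    and p_Psi: "integrable lborel (\<lambda>x. p x * Psi x)"
    and V_C1: "Ck 1 V"
    and stat: "stationary p V Sp mp Psi"
  shows "\<forall>\<phi>. test_fun \<phi> \<longrightarrow>
     - (1/2) * expect p (\<lambda>x. grad \<phi> x \<bullet> (cov p *v (grad (\<lambda>y. ln (p y)) x
                + (matrix_inv Sp *v (x + mean p - 2 *\<^sub>R mp)))))
     = expect p (\<lambda>x. \<phi> x * (Psi x - expect p Psi))"
proof (intro allI impI)
  fix \<phi> :: "real^'n \<Rightarrow> real"
  assume tf: "test_fun \<phi>"
  then obtain K where K: "compact K" and \<phi>z: "\<And>x. x \<notin> K \<Longrightarrow> \<phi> x = 0" and sm: "smooth \<phi>"
    unfolding test_fun_def by blast
  have "Ck (Suc (Suc 0)) \<phi>" using sm unfolding smooth_def by blast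
  then have d\<phi>: "\<And>i x. partial i \<phi> differentiable (at x)"
    and c\<phi>: "\<And>i. continuous_on UNIV (partial i \<phi>)"
    and c\<phi>2: "\<And>i j. continuous_on UNIV (partial j (partial i \<phi>))" by auto
  have dp: "\<And>x. p differentiable (at x)" and cp: "continuous_on UNIV p"
    and cpj: "\<And>j. continuous_on UNIV (partial j p)" using p_C1 by auto
  have cVj: "\<And>j. continuous_on UNIV (partial j V)" using V_C1 by auto
  have \<phi>1z: "partial i \<phi> x = 0" if "x \<notin> K" for i x using partial_zero_outside[OF K \<phi>z that] .
  have \<phi>2z: "partial j (partial i \<phi>) x = 0" if "x \<notin> K" for i j x
    using partial_zero_outside[OF K \<phi>1z that] .
  have g\<phi>z: "grad \<phi> x = 0" if "x \<notin> K" for x unfolding grad_def using \<phi>1z[OF that] by (simp add: vec_eq_iff)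
  have cg\<phi>: "continuous_on UNIV (grad \<phi>)" unfolding grad_def by (intro continuous_on_vec_lambda c\<phi>)
  have cgV: "continuous_on UNIV (grad V)" unfolding grad_def by (intro continuous_on_vec_lambda cVj)
  define S where "S = cov p"
  define Mi where "Mi = matrix_inv Sp"
  define w where "w x = x + mean p - 2 *\<^sub>R mp" for x
  define T1 where "T1 x = grad \<phi> x \<bullet> (S *v grad V x)" for x
  define T2 where "T2 x = grad \<phi> x \<bullet> (S *v (Mi *v w x))" for x
  have cw: "continuous_on UNIV w" unfolding w_def by (intro continuous_intros)
  have i1: "integrable lborel (\<lambda>x. p x * T1 x)"
    by (rule integrable_cpt[OF _ K]) (auto simp: T1_def g\<phi>z intro!: continuous_intros cp cg\<phi> cont_mv cgV)
  have i2: "integrable lborel (\<lambda>x. p x * T2 x)"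
    by (rule integrable_cpt[OF _ K]) (auto simp: T2_def g\<phi>z intro!: continuous_intros cp cg\<phi> cont_mv cw)
  have iH: "integrable lborel (\<lambda>x. p x * partial j (partial i \<phi>) x)" for i j
    by (rule integrable_cpt[OF _ K]) (auto simp: \<phi>2z intro!: continuous_intros cp c\<phi>2)
  have iC: "integrable lborel (\<lambda>x. partial j p x * partial i \<phi> x)" for i j
    by (rule integrable_cpt[OF _ K]) (auto simp: \<phi>1z intro!: continuous_intros cpj c\<phi>)
  have ibp: "integral\<^sup>L lborel (\<lambda>x. p x * partial j (partial i \<phi>) x) = - integral\<^sup>L lborel (\<lambda>x. partial j p x * partial i \<phi> x)" for i j
    by (rule prod_ibp[OF dp d\<phi> cp c\<phi> cpj _ K \<phi>1z]) (rule c\<phi>2)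
  have A: "expect p T1 = expect p (\<lambda>x. \<phi> x * (Psi x - expect p Psi))"
    using stat tf unfolding stationary_def solves_V_def T1_def S_def by blast
  have st: "expect p (\<lambda>x. grad \<phi> x \<bullet> drift p V Sp mp x
                    + (1/2) * (\<Sum>i\<in>UNIV. \<Sum>j\<in>UNIV. cov p $ i $ j * hess \<phi> x $ i $ j)) = 0"
    using stat tf unfolding stationary_def by blast
  have e1: "p x * (grad \<phi> x \<bullet> drift p V Sp mp x + (1/2) * (\<Sum>i\<in>UNIV. \<Sum>j\<in>UNIV. cov p $ i $ j * hess \<phi> x $ i $ j))
     = - (p x * T1 x) - (1/2) * (p x * T2 x) + (1/2) * (\<Sum>i\<in>UNIV. \<Sum>j\<in>UNIV. S $ i $ j * (p x * partial j (partial i \<phi>) x))" for x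
    unfolding drift_def T1_def T2_def S_def Mi_def w_def hess_def
    by (simp add: matrix_vector_right_distrib matrix_vector_mult_scaleR inner_add_right sum_distrib_left algebra_simps)
  have st2: "- integral\<^sup>L lborel (\<lambda>x. p x * T1 x) - (1/2) * integral\<^sup>L lborel (\<lambda>x. p x * T2 x)
      + (1/2) * (\<Sum>i\<in>UNIV. \<Sum>j\<in>UNIV. S $ i $ j * integral\<^sup>L lborel (\<lambda>x. p x * partial j (partial i \<phi>) x)) = 0"
  proof -
    have "integral\<^sup>L lborel (\<lambda>x. - (p x * T1 x) - (1/2) * (p x * T2 x) + (1/2) * (\<Sum>i\<in>UNIV. \<Sum>j\<in>UNIV. S $ i $ j * (p x * partial j (partial i \<phi>) x))) = 0"
      using st unfolding expect_def e1 .
    then show ?thesis using i1 i2 iH by (simp add: integral_sum)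
  qed
  have e2: "p x * (grad \<phi> x \<bullet> (cov p *v (grad (\<lambda>y. ln (p y)) x + (matrix_inv Sp *v (x + mean p - 2 *\<^sub>R mp)))))
     = (\<Sum>i\<in>UNIV. \<Sum>j\<in>UNIV. S $ i $ j * (partial j p x * partial i \<phi> x)) + p x * T2 x" for x
  proof -
    have "grad (\<lambda>y. ln (p y)) x = (1 / p x) *\<^sub>R grad p x"
      unfolding grad_def using ln_partial[OF p_pos dp] by (simp add: vec_eq_iff)
    then show ?thesis
      unfolding T2_def S_def Mi_def w_def
      using p_pos[of x]
      by (simp add: matrix_vector_right_distrib matrix_vector_mult_scaleR inner_add_right inner_mat grad_def sum_distrib_left algebra_simps)
  qed
  have G: "expect p (\<lambda>x. grad \<phi> x \<bullet> (cov p *v (grad (\<lambda>y. ln (p y)) x + (matrix_inv Sp *v (x + mean p - 2 *\<^sub>R mp)))))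
     = (\<Sum>i\<in>UNIV. \<Sum>j\<in>UNIV. S $ i $ j * integral\<^sup>L lborel (\<lambda>x. partial j p x * partial i \<phi> x)) + integral\<^sup>L lborel (\<lambda>x. p x * T2 x)"
    unfolding expect_def e2 using i2 iC by (simp add: integral_sum)
  show "- (1/2) * expect p (\<lambda>x. grad \<phi> x \<bullet> (cov p *v (grad (\<lambda>y. ln (p y)) x
                + (matrix_inv Sp *v (x + mean p - 2 *\<^sub>R mp)))))
     = expect p (\<lambda>x. \<phi> x * (Psi x - expect p Psi))"
    unfolding G A[symmetric] using st2 unfolding expect_def ibp
    by (simp add: sum_negf algebra_simps)
qed

end
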